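(* Let $\Gamma\in\mathcal S$ with embedding $\varphi$, and let $\Gamma_1,\Gamma_2\subset\Gamma$ be disjoint connected subtrees. Then for at least one $k\in\{1,2\}$ the vector $w_k=\sum_{v\in\Gamma_k}\varphi(v)$ is of the form $E_a-\sum_{j\in J}E_j$ with $a\notin J$.
   Context: A plumbing tree is a finite tree $\Gamma$ each of whose vertices $v$ carries an integer decoration $d(v)$. $\Gamma$ is minimal if no vertex has decoration $-1$. For $n\ge 1$ let $(\mathbb Z^n,Q_n)$ be the lattice with basis $E_1,\dots,E_n$ and $Q_n(E_i,E_j)=-\delta_{ij}$, and let $K=\sum_{i=1}^n E_i$. A plumbing tree $\Gamma$ on $n$ vertices is a symplectic plumbing tree if there is a map $\varphi$ (an embedding) from its vertex set to $\mathbb Z^n$ such that: for distinct vertices $v_1,v_2$, $Q_n(\varphi(v_1),\varphi(v_2))$ is $1$ if they are adjacent and $0$ otherwise; $Q_n(\varphi(v),\varphi(v))=d(v)$ for every $v$; and $Q_n(\varphi(v),K)+Q_n(\varphi(v),\varphi(v))=-2$ for every $v$. $\mathcal S$ is the set of minimal, connected symplectic plumbing trees. *)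

theory Defs
  imports Main "HOL-Library.Function_Algebras"
begin

definition adj :: "'v set set \<Rightarrow> 'v \<Rightarrow> 'v \<Rightarrow> bool" where
  "adj Ed x y \<longleftrightarrow> x \<noteq> y \<and> {x, y} \<in> Ed"

definition simple_graph :: "'v set \<Rightarrow> 'v set set \<Rightarrow> bool" where
  "simple_graph V Ed \<longleftrightarrow> finite V \<and> (\<forall>e\<in>Ed. \<exists>x y. x \<in> V \<and> y \<in> V \<and> x \<noteq> y \<and> e = {x, y})"

definition connected_on :: "'v set set \<Rightarrow> 'v set \<Rightarrow> bool" where
  "connected_on Ed S \<longleftrightarrow> S \<noteq> {} \<and>
     (\<forall>x\<in>S. \<forall>y\<in>S. (x, y) \<in> {(a, b). a \<in> S \<and> b \<in> S \<and> adj Ed a b}\<^sup>*)"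

definition is_tree :: "'v set \<Rightarrow> 'v set set \<Rightarrow> bool" where
  "is_tree V Ed \<longleftrightarrow> simple_graph V Ed \<and> connected_on Ed V \<and> card Ed + 1 = card V"

definition connected_subtree :: "'v set \<Rightarrow> 'v set set \<Rightarrow> 'v set \<Rightarrow> bool" where
  "connected_subtree V Ed S \<longleftrightarrow> S \<subseteq> V \<and> connected_on Ed S"

text \<open>The lattice (Z^n, Q_n): vectors are functions nat => int supported in {0..<n};
  the basis vector E_i (i < n) is the indicator of i.\<close>
definition Qn :: "nat \<Rightarrow> (nat \<Rightarrow> int) \<Rightarrow> (nat \<Rightarrow> int) \<Rightarrow> int" where
  "Qn n x y = - (\<Sum>i<n. x i * y i)"

definition Ebas :: "nat \<Rightarrow> nat \<Rightarrow> int" where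
  "Ebas i = (\<lambda>j. if j = i then 1 else 0)"

definition Kvec :: "nat \<Rightarrow> nat \<Rightarrow> int" where
  "Kvec n = (\<Sum>i<n. Ebas i)"

definition in_Zn :: "nat \<Rightarrow> (nat \<Rightarrow> int) \<Rightarrow> bool" where
  "in_Zn n x \<longleftrightarrow> (\<forall>i\<ge>n. x i = 0)"

definition symplectic_embedding ::
  "'v set \<Rightarrow> 'v set set \<Rightarrow> ('v \<Rightarrow> int) \<Rightarrow> ('v \<Rightarrow> nat \<Rightarrow> int) \<Rightarrow> bool" where
  "symplectic_embedding V Ed d \<phi> \<longleftrightarrow>
     (let n = card V in
       (\<forall>v\<in>V. in_Zn n (\<phi> v)) \<and>
       (\<forall>v1\<in>V. \<forall>v2\<in>V. v1 \<noteq> v2 \<longrightarrow>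
           Qn n (\<phi> v1) (\<phi> v2) = (if adj Ed v1 v2 then 1 else 0)) \<and>
       (\<forall>v\<in>V. Qn n (\<phi> v) (\<phi> v) = d v) \<and>
       (\<forall>v\<in>V. Qn n (\<phi> v) (Kvec n) + Qn n (\<phi> v) (\<phi> v) = -2))"

definition minimal_plumbing :: "'v set \<Rightarrow> ('v \<Rightarrow> int) \<Rightarrow> bool" where
  "minimal_plumbing V d \<longleftrightarrow> (\<forall>v\<in>V. d v \<noteq> -1)"

definition in_class_S :: "'v set \<Rightarrow> 'v set set \<Rightarrow> ('v \<Rightarrow> int) \<Rightarrow> bool" where
  "in_class_S V Ed d \<longleftrightarrow> is_tree V Ed \<and> minimal_plumbing V d \<and>
     (\<exists>\<phi>. symplectic_embedding V Ed d \<phi>)"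

end

theory Submission
  imports Defs
begin

lemma fsum_apply: "(\<Sum>v\<in>S. (f v :: nat \<Rightarrow> int)) i = (\<Sum>v\<in>S. f v i)"
  by (induction S rule: infinite_finite_induct) (auto simp: zero_fun_def plus_fun_def)

definition dotp :: "nat \<Rightarrow> (nat \<Rightarrow> int) \<Rightarrow> (nat \<Rightarrow> int) \<Rightarrow> int" where
  "dotp n x y = (\<Sum>i<n. x i * y i)"

definition T1 :: "nat \<Rightarrow> (nat \<Rightarrow> int) \<Rightarrow> bool" where
  "T1 n x \<longleftrightarrow> (\<exists>a<n. x a = 1 \<and> (\<forall>i. i \<noteq> a \<longrightarrow> x i = 0 \<or> x i = -1))"

definition NP :: "(nat \<Rightarrow> int) \<Rightarrow> bool" where
  "NP x \<longleftrightarrow> (\<forall>i. x i \<le> 0)"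

lemma dotp_sum_left: "dotp n (\<Sum>v\<in>S. f v) y = (\<Sum>v\<in>S. dotp n (f v) y)"
  unfolding dotp_def fsum_apply by (simp add: sum_distrib_right sum.swap[of _ S])

lemma dotp_comm: "dotp n x y = dotp n y x"
  unfolding dotp_def by (simp add: mult.commute)

lemma dotp_add_left: "dotp n (x + y) z = dotp n x z + dotp n y z"
  unfolding dotp_def by (simp add: distrib_right sum.distrib)

lemma NP_NP_dot: "NP x \<Longrightarrow> NP y \<Longrightarrow> dotp n x y \<ge> 0"
  unfolding dotp_def NP_def by (auto intro!: sum_nonneg mult_nonpos_nonpos)

lemma sum_split1:
  fixes f :: "nat \<Rightarrow> int"
  assumes "a < n"
  shows "(\<Sum>i<n. f i) = f a + (\<Sum>i\<in>{..<n}-{a}. f i)"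
  using assms by (simp add: sum.remove)

lemma sum_split2:
  fixes f :: "nat \<Rightarrow> int"
  assumes "a < n" "b < n" "a \<noteq> b"
  shows "(\<Sum>i<n. f i) = f a + f b + (\<Sum>i\<in>{..<n}-{a}-{b}. f i)"
proof -
  have "(\<Sum>i<n. f i) = f a + (\<Sum>i\<in>{..<n}-{a}. f i)" using assms by (simp add: sum.remove)
  also have "(\<Sum>i\<in>{..<n}-{a}. f i) = f b + (\<Sum>i\<in>{..<n}-{a}-{b}. f i)"
    using assms by (subst sum.remove[of _ b]) auto
  finally show ?thesis by simp
qed

lemma grow_NP:
  assumes x: "NP x" and y: "T1 n y \<or> NP y" and d: "dotp n x y \<le> -1"
  shows "NP (x + y)"
proof (cases "NP y")
  case True
  then show ?thesis using NP_NP_dot[OF x True, of n] d by simp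
next
  case False
  with y obtain b where b: "b < n" "y b = 1" "\<forall>i. i \<noteq> b \<longrightarrow> y i = 0 \<or> y i = -1"
    unfolding T1_def by auto
  have "dotp n x y = x b * y b + (\<Sum>i\<in>{..<n}-{b}. x i * y i)"
    unfolding dotp_def by (rule sum_split1[OF b(1)])
  moreover have "(\<Sum>i\<in>{..<n}-{b}. x i * y i) \<ge> 0"
    using x b(3) unfolding NP_def by (intro sum_nonneg) (auto intro: mult_nonpos_nonpos)
  ultimately have "x b \<le> -1" using d b(2) by simp
  show ?thesis unfolding NP_def
  proof
    fix i
    show "(x + y) i \<le> 0"
    proof (cases "i = b")
      case True
      then show ?thesis using \<open>x b \<le> -1\<close> b(2) by simp
    next
      case False
      then have "y i \<le> 0" using b(3) by fastforce
      then show ?thesis using x unfolding NP_def by (simp add: add_nonpos_nonpos)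
    qed
  qed
qed

lemma grow_T1:
  assumes x: "T1 n x" and y: "T1 n y \<or> NP y" and d: "dotp n x y \<le> -1"
    and zx: "in_Zn n x" and zy: "in_Zn n y"
  shows "T1 n (x + y) \<or> NP (x + y)"
proof -
  obtain a where a: "a < n" "x a = 1" "\<forall>i. i \<noteq> a \<longrightarrow> x i = 0 \<or> x i = -1"
    using x unfolding T1_def by auto
  show ?thesis
  proof (cases "NP y")
    case True
    have "dotp n x y = x a * y a + (\<Sum>i\<in>{..<n}-{a}. x i * y i)"
      unfolding dotp_def by (rule sum_split1[OF a(1)])
    moreover have "(\<Sum>i\<in>{..<n}-{a}. x i * y i) \<ge> 0"
      using True a(3) unfolding NP_def by (intro sum_nonneg) (auto intro: mult_nonpos_nonpos)
    ultimately have ya: "y a \<le> -1" using d a(2) by simp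
    have "NP (x + y)" unfolding NP_def
    proof
      fix i
      show "(x + y) i \<le> 0"
      proof (cases "i = a")
        case True
        then show ?thesis using ya a(2) by simp
      next
        case False
        then have "x i \<le> 0" using a(3) by fastforce
        then show ?thesis using \<open>NP y\<close> unfolding NP_def by (simp add: add_nonpos_nonpos)
      qed
    qed
    then show ?thesis ..
  next
    case False
    with y obtain b where b: "b < n" "y b = 1" "\<forall>i. i \<noteq> b \<longrightarrow> y i = 0 \<or> y i = -1"
      unfolding T1_def by auto
    show ?thesis
    proof (cases "a = b")
      case True
      have "dotp n x y = x a * y a + (\<Sum>i\<in>{..<n}-{a}. x i * y i)"
        unfolding dotp_def by (rule sum_split1[OF a(1)])
      moreover have "(\<Sum>i\<in>{..<n}-{a}. x i * y i) \<ge> 0"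
        using True a(3) b(3) by (intro sum_nonneg) fastforce
      ultimately show ?thesis using d a(2) b(2) True by simp
    next
      case ab: False
      define R where "R = {..<n}-{a}-{b}"
      have fR: "finite R" unfolding R_def by simp
      have dsplit: "dotp n x y = x a * y a + x b * y b + (\<Sum>i\<in>R. x i * y i)"
        unfolding dotp_def R_def by (rule sum_split2[OF a(1) b(1) ab])
      have nn: "\<And>i. i \<in> R \<Longrightarrow> x i * y i \<ge> 0"
      proof -
        fix i assume "i \<in> R"
        then have "i \<noteq> a" "i \<noteq> b" unfolding R_def by auto
        then have "x i \<le> 0" "y i \<le> 0" using a(3) b(3) by fastforce+
        then show "x i * y i \<ge> 0" by (simp add: mult_nonpos_nonpos)
      qed
      have Rnn: "(\<Sum>i\<in>R. x i * y i) \<ge> 0" using nn by (intro sum_nonneg) auto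
      have xb: "x b = 0 \<or> x b = -1" using a(3) ab by auto
      have ya: "y a = 0 \<or> y a = -1" using b(3) ab by auto
      have key: "y a + x b + (\<Sum>i\<in>R. x i * y i) \<le> -1" using d dsplit a(2) b(2) by simp
      have each: "\<And>i. i \<in> R \<Longrightarrow> x i * y i \<le> (\<Sum>i\<in>R. x i * y i)"
        using nn fR by (intro member_le_sum) auto
      have outside: "\<And>i. i \<ge> n \<Longrightarrow> x i = 0 \<and> y i = 0" using zx zy unfolding in_Zn_def by auto
      consider "y a = -1" "x b = -1" | "y a = 0" "x b = -1" | "y a = -1" "x b = 0"
        using xb ya key Rnn by fastforce
      then show ?thesis
      proof cases
        case 1
        have "NP (x + y)" unfolding NP_def
        proof
          fix i
          show "(x + y) i \<le> 0"
          proof -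
            have "i = a \<or> i = b \<or> (i \<noteq> a \<and> i \<noteq> b)" by auto
            then show ?thesis
            proof (elim disjE)
              assume "i = a" then show ?thesis using 1 a(2) by simp
            next
              assume "i = b" then show ?thesis using 1 b(2) by simp
            next
              assume "i \<noteq> a \<and> i \<noteq> b"
              then have "x i \<le> 0" "y i \<le> 0" using a(3) b(3) by fastforce+
              then show ?thesis by simp
            qed
          qed
        qed
        then show ?thesis ..
      next
        case 2
        have R0: "\<And>i. i \<in> R \<Longrightarrow> x i * y i = 0"
          using each nn key 2 by (smt (verit))
        have "T1 n (x + y)" unfolding T1_def
        proof (intro exI[of _ a] conjI allI impI)
          show "a < n" by (rule a(1))
          show "(x + y) a = 1" using a(2) 2 by simp
          fix i assume ia: "i \<noteq> a"
          show "(x + y) i = 0 \<or> (x + y) i = -1"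
          proof (cases "i = b")
            case True then show ?thesis using 2 b(2) by simp
          next
            case ib: False
            show ?thesis
            proof (cases "i < n")
              case True
              then have "i \<in> R" unfolding R_def using ia ib by auto
              then have "x i * y i = 0" by (rule R0)
              moreover have "x i = 0 \<or> x i = -1" "y i = 0 \<or> y i = -1" using a(3) b(3) ia ib by auto
              ultimately show ?thesis by auto
            next
              case False
              then show ?thesis using outside by simp
            qed
          qed
        qed
        then show ?thesis ..
      next
        case 3
        have R0: "\<And>i. i \<in> R \<Longrightarrow> x i * y i = 0"
          using each nn key 3 by (smt (verit))
        have "T1 n (x + y)" unfolding T1_def
        proof (intro exI[of _ b] conjI allI impI)
          show "b < n" by (rule b(1))
          show "(x + y) b = 1" using b(2) 3 by simp
          fix i assume ib: "i \<noteq> b"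
          show "(x + y) i = 0 \<or> (x + y) i = -1"
          proof (cases "i = a")
            case True then show ?thesis using 3 a(2) by simp
          next
            case ia: False
            show ?thesis
            proof (cases "i < n")
              case True
              then have "i \<in> R" unfolding R_def using ia ib by auto
              then have "x i * y i = 0" by (rule R0)
              moreover have "x i = 0 \<or> x i = -1" "y i = 0 \<or> y i = -1" using a(3) b(3) ia ib by auto
              ultimately show ?thesis by auto
            next
              case False
              then show ?thesis using outside by simp
            qed
          qed
        qed
        then show ?thesis ..
      qed
    qed
  qed
qed


lemma Kvec_apply: "Kvec n i = (if i < n then 1 else 0)"
  unfolding Kvec_def fsum_apply Ebas_def by (simp add: sum.delta')

lemma sq_nonneg_int: "(z::int) * z + z \<ge> 0"
proof (cases "z \<ge> 0")
  case True then show ?thesis by simp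
next
  case False
  then have "z * (z + 1) \<ge> 0" by (intro mult_nonpos_nonpos) auto
  then show ?thesis by (simp add: algebra_simps)
qed

lemma vertex_type:
  assumes z: "in_Zn n x" and adj: "Qn n x (Kvec n) + Qn n x x = -2"
  shows "T1 n x \<or> NP x"
proof (cases "NP x")
  case True then show ?thesis ..
next
  case False
  then obtain a where xa: "x a > 0" unfolding NP_def by (auto simp: not_le)
  have an: "a < n"
  proof (rule ccontr)
    assume "\<not> a < n"
    then have "x a = 0" using z unfolding in_Zn_def by simp
    with xa show False by simp
  qed
  have S: "(\<Sum>i<n. x i * x i + x i) = 2"
    using adj unfolding Qn_def Kvec_apply by (simp add: sum.distrib)
  have split: "(\<Sum>i<n. x i * x i + x i) = (x a * x a + x a) + (\<Sum>i\<in>{..<n}-{a}. x i * x i + x i)"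
    by (rule sum_split1[OF an])
  have rnn: "(\<Sum>i\<in>{..<n}-{a}. x i * x i + x i) \<ge> 0" by (intro sum_nonneg) (rule sq_nonneg_int)
  have "x a * x a \<ge> x a * 1" using xa by (intro mult_left_mono) auto
  then have fa: "x a * x a + x a \<ge> 2" using xa by linarith
  have xa1: "x a = 1"
  proof (rule ccontr)
    assume "x a \<noteq> 1"
    then have "x a \<ge> 2" using xa by simp
    then have "x a * x a \<ge> x a * 2" by (intro mult_left_mono) auto
    then have "x a * x a \<ge> 4" using \<open>x a \<ge> 2\<close> by linarith
    then show False using S split rnn \<open>x a \<ge> 2\<close> by linarith
  qed
  have r0: "(\<Sum>i\<in>{..<n}-{a}. x i * x i + x i) = 0" using S split rnn xa1 by simp
  have each: "\<And>i. i \<in> {..<n}-{a} \<Longrightarrow> x i * x i + x i = 0"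
  proof -
    have "\<forall>i\<in>{..<n}-{a}. x i * x i + x i = 0"
      using r0 by (subst (asm) sum_nonneg_eq_0_iff) (auto intro: sq_nonneg_int)
    then show "\<And>i. i \<in> {..<n}-{a} \<Longrightarrow> x i * x i + x i = 0" by blast
  qed
  have "\<forall>i. i \<noteq> a \<longrightarrow> x i = 0 \<or> x i = -1"
  proof (intro allI impI)
    fix i assume ia: "i \<noteq> a"
    show "x i = 0 \<or> x i = -1"
    proof (cases "i < n")
      case True
      then have e: "x i * x i + x i = 0" using each ia by auto
      have "x i * (x i + 1) = 0" using e by (simp add: algebra_simps)
      then have "x i = 0 \<or> x i + 1 = 0" by (simp only: mult_eq_0_iff)
      then show ?thesis by auto
    next
      case False then show ?thesis using z unfolding in_Zn_def by auto
    qed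
  qed
  then show ?thesis unfolding T1_def using an xa1 by auto
qed

lemma T1_witness:
  assumes z: "in_Zn n x" and t: "T1 n x"
  shows "\<exists>a J. a < n \<and> J \<subseteq> {..<n} \<and> a \<notin> J \<and> x = Ebas a - (\<Sum>j\<in>J. Ebas j)"
proof -
  obtain a where a: "a < n" "x a = 1" "\<forall>i. i \<noteq> a \<longrightarrow> x i = 0 \<or> x i = -1"
    using t unfolding T1_def by auto
  define J where "J = {i. i < n \<and> x i = -1}"
  have fJ: "finite J" unfolding J_def by simp
  have "x = Ebas a - (\<Sum>j\<in>J. Ebas j)"
  proof
    fix i
    have "(Ebas a - (\<Sum>j\<in>J. Ebas j)) i = (if i = a then 1 else 0) - (if i \<in> J then 1 else 0)"
      unfolding fsum_apply Ebas_def using fJ by (simp add: sum.delta)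
    also have "\<dots> = x i"
      using a z unfolding J_def in_Zn_def by (cases "i < n") auto
    finally show "x i = (Ebas a - (\<Sum>j\<in>J. Ebas j)) i" by simp
  qed
  moreover have "J \<subseteq> {..<n}" "a \<notin> J" unfolding J_def using a by auto
  ultimately show ?thesis using a(1) by blast
qed


lemma reach_out:
  assumes "(x, y) \<in> {(a, b). a \<in> X \<and> b \<in> X \<and> adj Ed a b}\<^sup>*" and "x \<in> S" and "y \<notin> S"
  shows "\<exists>s\<in>S. \<exists>u\<in>X. u \<notin> S \<and> adj Ed s u"
  using assms
proof (induction rule: rtrancl_induct)
  case base
  then show ?case by simp
next
  case (step y z)
  show ?case
  proof (cases "y \<in> S")
    case True
    then show ?thesis using step by auto
  next
    case False
    then show ?thesis using step by auto
  qed
qed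

locale emb_ctx =
  fixes V :: "'v set" and Ed :: "'v set set" and \<phi> :: "'v \<Rightarrow> nat \<Rightarrow> int" and n :: nat
  assumes finV: "finite V"
    and zV: "\<And>v. v \<in> V \<Longrightarrow> in_Zn n (\<phi> v)"
    and dE: "\<And>v1 v2. v1 \<in> V \<Longrightarrow> v2 \<in> V \<Longrightarrow> v1 \<noteq> v2 \<Longrightarrow>
               dotp n (\<phi> v1) (\<phi> v2) = (if adj Ed v1 v2 then -1 else 0)"
    and vt: "\<And>v. v \<in> V \<Longrightarrow> T1 n (\<phi> v) \<or> NP (\<phi> v)"
begin

lemma zS: "S \<subseteq> V \<Longrightarrow> in_Zn n (\<Sum>v\<in>S. \<phi> v)"
  unfolding in_Zn_def fsum_apply using zV unfolding in_Zn_def by (auto intro!: sum.neutral)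

lemma dot_le0:
  assumes "S \<subseteq> V" "u \<in> V" "u \<notin> S"
  shows "dotp n (\<Sum>v\<in>S. \<phi> v) (\<phi> u) \<le> 0"
  unfolding dotp_sum_left
proof (rule sum_nonpos)
  fix v assume "v \<in> S"
  then have "v \<in> V" "v \<noteq> u" using assms by auto
  then show "dotp n (\<phi> v) (\<phi> u) \<le> 0" using dE[of v u] assms by simp
qed

lemma dot_adj:
  assumes "S \<subseteq> V" "u \<in> V" "u \<notin> S" "s \<in> S" "adj Ed s u"
  shows "dotp n (\<Sum>v\<in>S. \<phi> v) (\<phi> u) \<le> -1"
proof -
  have fS: "finite S" using assms(1) finV by (rule finite_subset)
  have "dotp n (\<Sum>v\<in>S. \<phi> v) (\<phi> u) = dotp n (\<phi> s) (\<phi> u) + (\<Sum>v\<in>S-{s}. dotp n (\<phi> v) (\<phi> u))"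
    unfolding dotp_sum_left using fS assms(4) by (simp add: sum.remove)
  moreover have "dotp n (\<phi> s) (\<phi> u) = -1" using dE[of s u] assms by auto
  moreover have "(\<Sum>v\<in>S-{s}. dotp n (\<phi> v) (\<phi> u)) \<le> 0"
  proof (rule sum_nonpos)
    fix v assume "v \<in> S - {s}"
    then have "v \<in> V" "v \<noteq> u" using assms by auto
    then show "dotp n (\<phi> v) (\<phi> u) \<le> 0" using dE[of v u] assms by simp
  qed
  ultimately show ?thesis by simp
qed

lemma grow_step:
  assumes "S \<subseteq> V" "u \<in> V" "u \<notin> S" "s \<in> S" "adj Ed s u"
  shows "(T1 n (\<Sum>v\<in>S. \<phi> v) \<or> NP (\<Sum>v\<in>S. \<phi> v)) \<Longrightarrow>
           T1 n (\<Sum>v\<in>insert u S. \<phi> v) \<or> NP (\<Sum>v\<in>insert u S. \<phi> v)"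
    and "NP (\<Sum>v\<in>S. \<phi> v) \<Longrightarrow> NP (\<Sum>v\<in>insert u S. \<phi> v)"
proof -
  have fS: "finite S" using assms(1) finV by (rule finite_subset)
  have ins: "(\<Sum>v\<in>insert u S. \<phi> v) = (\<Sum>v\<in>S. \<phi> v) + \<phi> u"
    using fS assms(3) by (simp add: add.commute)
  have d: "dotp n (\<Sum>v\<in>S. \<phi> v) (\<phi> u) \<le> -1" by (rule dot_adj[OF assms])
  have y: "T1 n (\<phi> u) \<or> NP (\<phi> u)" using vt assms(2) by simp
  show "NP (\<Sum>v\<in>S. \<phi> v) \<Longrightarrow> NP (\<Sum>v\<in>insert u S. \<phi> v)"
    unfolding ins using grow_NP y d by blast
  assume h: "T1 n (\<Sum>v\<in>S. \<phi> v) \<or> NP (\<Sum>v\<in>S. \<phi> v)"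
  show "T1 n (\<Sum>v\<in>insert u S. \<phi> v) \<or> NP (\<Sum>v\<in>insert u S. \<phi> v)"
    unfolding ins using h
  proof
    assume "T1 n (\<Sum>v\<in>S. \<phi> v)"
    then show "T1 n ((\<Sum>v\<in>S. \<phi> v) + \<phi> u) \<or> NP ((\<Sum>v\<in>S. \<phi> v) + \<phi> u)"
      using grow_T1 y d zS[OF assms(1)] zV[OF assms(2)] by blast
  next
    assume "NP (\<Sum>v\<in>S. \<phi> v)"
    then show "T1 n ((\<Sum>v\<in>S. \<phi> v) + \<phi> u) \<or> NP ((\<Sum>v\<in>S. \<phi> v) + \<phi> u)"
      using grow_NP y d by blast
  qed
qed

lemma conn_P_aux:
  assumes G: "G \<subseteq> V" "connected_on Ed G"
  shows "card (G - S) = m \<Longrightarrow> S \<subseteq> G \<Longrightarrow> S \<noteq> {} \<Longrightarrow>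
     T1 n (\<Sum>v\<in>S. \<phi> v) \<or> NP (\<Sum>v\<in>S. \<phi> v) \<Longrightarrow> T1 n (\<Sum>v\<in>G. \<phi> v) \<or> NP (\<Sum>v\<in>G. \<phi> v)"
proof (induction m arbitrary: S)
  case 0
  have fG: "finite G" using G(1) finV by (rule finite_subset)
  then have "S = G" using 0 by auto
  then show ?case using 0 by simp
next
  case (Suc m)
  have fG: "finite G" using G(1) finV by (rule finite_subset)
  obtain x where x: "x \<in> S" using Suc.prems by auto
  have "G - S \<noteq> {}"
  proof
    assume "G - S = {}"
    then show False using Suc.prems(1) by (metis card.empty nat.distinct(1))
  qed
  then obtain y where y: "y \<in> G" "y \<notin> S" by auto
  have "(x, y) \<in> {(a, b). a \<in> G \<and> b \<in> G \<and> adj Ed a b}\<^sup>*"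
    using conjunct2[OF G(2)[unfolded connected_on_def], rule_format, OF _ y(1)] x Suc.prems(2) by (meson subsetD)
  then obtain s u where su: "s \<in> S" "u \<in> G" "u \<notin> S" "adj Ed s u"
    using reach_out[OF _ x y(2)] by blast
  have "T1 n (\<Sum>v\<in>insert u S. \<phi> v) \<or> NP (\<Sum>v\<in>insert u S. \<phi> v)"
  proof (rule grow_step(1))
    show "S \<subseteq> V" using Suc.prems(2) G(1) by (rule subset_trans)
    show "u \<in> V" using su(2) G(1) by (rule subsetD[rotated])
  qed (use su Suc.prems(4) in auto)
  moreover have "card (G - insert u S) = m"
  proof -
    have "G - S = insert u (G - insert u S)" using su by auto
      then have "card (G - S) = Suc (card (G - insert u S))"
        by (metis card_insert_disjoint finite_Diff fG Diff_iff insertI1)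
    then show ?thesis using Suc.prems(1) by simp
  qed
  moreover have "insert u S \<subseteq> G" using su(2) Suc.prems(2) by simp
  ultimately show ?case using Suc.IH[of "insert u S"] by simp
qed

lemma conn_P:
  assumes "G \<subseteq> V" "connected_on Ed G"
  shows "T1 n (\<Sum>v\<in>G. \<phi> v) \<or> NP (\<Sum>v\<in>G. \<phi> v)"
proof -
  obtain x where x: "x \<in> G" using assms(2) unfolding connected_on_def by auto
  show ?thesis
    using conn_P_aux[OF assms refl, of "{x}"] x vt assms(1) by auto
qed

lemma NP_pair_dot:
  assumes "S \<subseteq> V" "T \<subseteq> V" "S \<inter> T = {}" "s \<in> S" "t \<in> T" "adj Ed s t"
  shows "dotp n (\<Sum>v\<in>S. \<phi> v) (\<Sum>v\<in>T. \<phi> v) \<le> -1"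
proof -
  have fT: "finite T" using assms(2) finV by (rule finite_subset)
  have "dotp n (\<Sum>v\<in>S. \<phi> v) (\<Sum>v\<in>T. \<phi> v) = (\<Sum>v\<in>T. dotp n (\<Sum>w\<in>S. \<phi> w) (\<phi> v))"
    by (subst dotp_comm, subst dotp_sum_left, simp add: dotp_comm)
  also have "\<dots> = dotp n (\<Sum>w\<in>S. \<phi> w) (\<phi> t) + (\<Sum>v\<in>T-{t}. dotp n (\<Sum>w\<in>S. \<phi> w) (\<phi> v))"
    using fT assms(5) by (simp add: sum.remove)
  also have "\<dots> \<le> -1 + 0"
  proof (rule add_mono)
    show "dotp n (\<Sum>w\<in>S. \<phi> w) (\<phi> t) \<le> -1" using dot_adj[of S t s] assms by auto
    show "(\<Sum>v\<in>T-{t}. dotp n (\<Sum>w\<in>S. \<phi> w) (\<phi> v)) \<le> 0"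
      using dot_le0[of S] assms by (intro sum_nonpos) auto
  qed
  finally show ?thesis by simp
qed

lemma no_two_NP_aux:
  assumes G2: "G2 \<subseteq> V" "G2 \<noteq> {}" "NP (\<Sum>v\<in>G2. \<phi> v)" and cV: "connected_on Ed V"
  shows "card (V - S) = m \<Longrightarrow> S \<subseteq> V \<Longrightarrow> S \<inter> G2 = {} \<Longrightarrow> S \<noteq> {} \<Longrightarrow>
     NP (\<Sum>v\<in>S. \<phi> v) \<Longrightarrow> False"
proof (induction m arbitrary: S rule: less_induct)
  case (less m)
  obtain x where x: "x \<in> S" using less.prems by auto
  obtain y where y: "y \<in> G2" using G2 by auto
  have yS: "y \<notin> S" using y less.prems(3) by auto
  have "(x, y) \<in> {(a, b). a \<in> V \<and> b \<in> V \<and> adj Ed a b}\<^sup>*"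
    using conjunct2[OF cV[unfolded connected_on_def], rule_format] x y less.prems(2) G2(1) by (meson subsetD)
  then obtain s u where su: "s \<in> S" "u \<in> V" "u \<notin> S" "adj Ed s u"
    using reach_out[OF _ x yS] by blast
  show False
  proof (cases "u \<in> G2")
    case True
    have "dotp n (\<Sum>v\<in>S. \<phi> v) (\<Sum>v\<in>G2. \<phi> v) \<le> -1"
      using NP_pair_dot[of S G2 s u] less.prems G2 su True by auto
    moreover have "dotp n (\<Sum>v\<in>S. \<phi> v) (\<Sum>v\<in>G2. \<phi> v) \<ge> 0"
      using NP_NP_dot less.prems(5) G2(3) by blast
    ultimately show False by simp
  next
    case False
    have "NP (\<Sum>v\<in>insert u S. \<phi> v)"
      using grow_step(2)[of S u s] su less.prems by auto
    moreover have "card (V - insert u S) < m"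
    proof -
      have "V - S = insert u (V - insert u S)" using su by auto
      then have "card (V - S) = Suc (card (V - insert u S))"
        by (metis card_insert_disjoint finite_Diff finV Diff_iff insertI1)
      then show ?thesis using less.prems(1) by simp
    qed
    moreover have "insert u S \<subseteq> V" using su(2) less.prems(2) by simp
    moreover have "insert u S \<inter> G2 = {}" using False less.prems(3) by simp
    ultimately show False using less.IH[OF _ refl, of "insert u S"] by simp
  qed
qed

end

lemma Qn_dotp: "Qn n x y = - dotp n x y"
  unfolding Qn_def dotp_def by simp

theorem corollary3p5:
  fixes V :: "'v set" and Ed :: "'v set set" and d :: "'v \<Rightarrow> int"
    and \<phi> :: "'v \<Rightarrow> nat \<Rightarrow> int" and G1 G2 :: "'v set"
  assumes "in_class_S V Ed d"
    and "symplectic_embedding V Ed d \<phi>"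
    and "connected_subtree V Ed G1" and "connected_subtree V Ed G2"
    and "G1 \<inter> G2 = {}"
  shows "\<exists>k\<in>{G1, G2}. \<exists>a J. a < card V \<and> J \<subseteq> {..<card V} \<and> a \<notin> J \<and>
           (\<Sum>v\<in>k. \<phi> v) = Ebas a - (\<Sum>j\<in>J. Ebas j)"
proof -
  define n where "n = card V"
  have tree: "is_tree V Ed" using assms(1) unfolding in_class_S_def by simp
  then have finV: "finite V" and cV: "connected_on Ed V"
    unfolding is_tree_def simple_graph_def by auto
  have emb: "\<forall>v\<in>V. in_Zn n (\<phi> v)"
    "\<forall>v1\<in>V. \<forall>v2\<in>V. v1 \<noteq> v2 \<longrightarrow> Qn n (\<phi> v1) (\<phi> v2) = (if adj Ed v1 v2 then 1 else 0)"
    "\<forall>v\<in>V. Qn n (\<phi> v) (Kvec n) + Qn n (\<phi> v) (\<phi> v) = -2"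
    using assms(2) unfolding symplectic_embedding_def Let_def n_def by auto
  interpret E: emb_ctx V Ed \<phi> n
  proof
    show "finite V" by (rule finV)
    show "\<And>v. v \<in> V \<Longrightarrow> in_Zn n (\<phi> v)" using emb(1) by blast
    show "\<And>v1 v2. v1 \<in> V \<Longrightarrow> v2 \<in> V \<Longrightarrow> v1 \<noteq> v2 \<Longrightarrow>
               dotp n (\<phi> v1) (\<phi> v2) = (if adj Ed v1 v2 then -1 else 0)"
    proof -
      fix v1 v2 assume h: "v1 \<in> V" "v2 \<in> V" "v1 \<noteq> v2"
      then have "- dotp n (\<phi> v1) (\<phi> v2) = (if adj Ed v1 v2 then 1 else 0)"
        using emb(2) unfolding Qn_dotp by blast
      then show "dotp n (\<phi> v1) (\<phi> v2) = (if adj Ed v1 v2 then -1 else 0)"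
        by (cases "adj Ed v1 v2") auto
    qed
    show "\<And>v. v \<in> V \<Longrightarrow> T1 n (\<phi> v) \<or> NP (\<phi> v)"
      using emb(1,3) vertex_type by blast
  qed
  have g1: "G1 \<subseteq> V" "connected_on Ed G1" and g2: "G2 \<subseteq> V" "connected_on Ed G2"
    using assms(3,4) unfolding connected_subtree_def by auto
  have P1: "T1 n (\<Sum>v\<in>G1. \<phi> v) \<or> NP (\<Sum>v\<in>G1. \<phi> v)" by (rule E.conn_P[OF g1])
  have P2: "T1 n (\<Sum>v\<in>G2. \<phi> v) \<or> NP (\<Sum>v\<in>G2. \<phi> v)" by (rule E.conn_P[OF g2])
  show ?thesis
  proof (cases "T1 n (\<Sum>v\<in>G1. \<phi> v)")
    case True
    then show ?thesis using T1_witness[OF E.zS[OF g1(1)] True] unfolding n_def by blast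
  next
    case F1: False
    show ?thesis
    proof (cases "T1 n (\<Sum>v\<in>G2. \<phi> v)")
      case True
      then show ?thesis using T1_witness[OF E.zS[OF g2(1)] True] unfolding n_def by blast
    next
      case False
      then have "NP (\<Sum>v\<in>G2. \<phi> v)" "NP (\<Sum>v\<in>G1. \<phi> v)" using P1 P2 F1 by auto
      moreover have "G2 \<noteq> {}" "G1 \<noteq> {}" using g1 g2 unfolding connected_on_def by auto
      moreover have "G1 \<inter> G2 = {}" by (rule assms(5))
      ultimately have False
        using E.no_two_NP_aux[OF g2(1) _ _ cV refl g1(1)] by simp
      then show ?thesis ..
    qed
  qed
qed

end
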